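(* Let $D_1\subset\mathbb{R}^2$ be an open disc centered at the origin, let $\boldsymbol{\gamma}_1,\dots,\boldsymbol{\gamma}_m$ be distinct unit vectors in $\mathbb{R}^2$ and $c_1,\dots,c_m$ nonzero reals. If $\boldsymbol{\gamma}(\boldsymbol{\psi})\neq 0$ for at least one $\boldsymbol{\psi}\in\mathbb{S}^1\setminus\mathcal{Z}_1$, then the vector-valued star transform $\mathcal{S}$ is invertible, i.e. every vector field $\mathbf{f}$ on $\mathbb{R}^2$ with components in $C^2_c(D_1)$ is uniquely (and explicitly) determined by $\mathcal{S}\mathbf{f}$.
   Context: For $\mathbf{x}=(x_1,x_2)$ set $\mathbf{x}^\perp=(-x_2,x_1)$. For a unit vector $\boldsymbol{\gamma}$, $\mathcal{X}_{\boldsymbol{\gamma}}h(\mathbf{x})=\int_0^\infty h(\mathbf{x}+t\boldsymbol{\gamma})\,dt$. The vector-valued star transform is $\mathcal{S}\mathbf{f}=\sum_{i=1}^m c_i\,\mathcal{X}_{\boldsymbol{\gamma}_i}\begin{bmatrix}\mathbf{f}\cdot\boldsymbol{\gamma}_i\\ \mathbf{f}\cdot\boldsymbol{\gamma}_i^\perp\end{bmatrix}$. $\mathcal{Z}_1=\bigcup_{i}\{\boldsymbol{\psi}\in\mathbb{S}^1:\boldsymbol{\psi}\cdot\boldsymbol{\gamma}_i=0\}$, and for $\boldsymbol{\psi}\in\mathbb{S}^1\setminus\mathcal{Z}_1$, $\boldsymbol{\gamma}(\boldsymbol{\psi})=-\sum_{i=1}^m\frac{c_i\boldsymbol{\gamma}_i}{\boldsymbol{\psi}\cdot\boldsymbol{\gamma}_i}$.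 *)

theory Defs
  imports "HOL-Analysis.Analysis"
begin

definition perp :: "real \<times> real \<Rightarrow> real \<times> real" where
  "perp x = (- snd x, fst x)"

definition divbeam :: "real \<times> real \<Rightarrow> (real \<times> real \<Rightarrow> real) \<Rightarrow> real \<times> real \<Rightarrow> real" where
  "divbeam g h x = integral {0..} (\<lambda>t. h (x + t *\<^sub>R g))"

definition star_transform ::
  "nat \<Rightarrow> (nat \<Rightarrow> real) \<Rightarrow> (nat \<Rightarrow> real \<times> real) \<Rightarrow> (real \<times> real \<Rightarrow> real \<times> real)
     \<Rightarrow> real \<times> real \<Rightarrow> real \<times> real" where
  "star_transform m c gam f x =
     ((\<Sum>i<m. c i * divbeam (gam i) (\<lambda>y. f y \<bullet> gam i) x),
      (\<Sum>i<m. c i * divbeam (gam i) (\<lambda>y. f y \<bullet> perp (gam i)) x))"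

definition Z1 :: "nat \<Rightarrow> (nat \<Rightarrow> real \<times> real) \<Rightarrow> (real \<times> real) set" where
  "Z1 m gam = (\<Union>i<m. {psi. norm psi = 1 \<and> psi \<bullet> gam i = 0})"

definition gamma_vec :: "nat \<Rightarrow> (nat \<Rightarrow> real) \<Rightarrow> (nat \<Rightarrow> real \<times> real) \<Rightarrow> real \<times> real \<Rightarrow> real \<times> real" where
  "gamma_vec m c gam psi = - (\<Sum>i<m. (c i / (psi \<bullet> gam i)) *\<^sub>R gam i)"

definition C2 :: "('a::real_normed_vector \<Rightarrow> 'b::real_normed_vector) \<Rightarrow> bool" where
  "C2 f \<longleftrightarrow> (\<exists>f' :: 'a \<Rightarrow> ('a \<Rightarrow>\<^sub>L 'b). \<exists>f'' :: 'a \<Rightarrow> ('a \<Rightarrow>\<^sub>L ('a \<Rightarrow>\<^sub>L 'b)).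
      (\<forall>x. (f has_derivative blinfun_apply (f' x)) (at x)) \<and>
      (\<forall>x. (f' has_derivative blinfun_apply (f'' x)) (at x)) \<and>
      continuous_on UNIV f'')"

definition C2c :: "(real \<times> real) set \<Rightarrow> (real \<times> real \<Rightarrow> real) \<Rightarrow> bool" where
  "C2c D h \<longleftrightarrow> C2 h \<and> compact (closure {x. h x \<noteq> 0}) \<and> closure {x. h x \<noteq> 0} \<subseteq> D"

end

theory Submission
  imports Defs "HOL-Computational_Algebra.Polynomial"
begin
definition nice :: "real \<Rightarrow> (real \<times> real \<Rightarrow> real) \<Rightarrow> bool" where
  "nice R h \<longleftrightarrow> continuous_on UNIV h \<and> (\<forall>x. R \<le> norm x \<longrightarrow> h x = 0)"

lemma cont_comp:
  assumes "continuous_on UNIV f" "continuous_on S p"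
  shows "continuous_on S (\<lambda>x. f (p x))"
  by (rule continuous_on_compose2[OF assms subset_UNIV])

lemma int_sub:
  fixes k :: "real \<Rightarrow> real"
  assumes "continuous_on UNIV k" "\<And>x. x \<notin> {p..q} \<Longrightarrow> k x = 0" "{p..q} \<subseteq> {p'..q'}"
  shows "integral {p'..q'} k = integral {p..q} k"
proof -
  have "(k has_integral integral {p..q} k) {p..q}"
    using assms(1) by (intro integrable_integral integrable_continuous_real continuous_on_subset[OF assms(1)]) auto
  then have "(k has_integral integral {p..q} k) {p'..q'}"
    using assms(2,3) by (rule has_integral_on_superset)
  then show ?thesis by (rule integral_unique)
qed

lemma int_univ:
  fixes k :: "real \<Rightarrow> real"
  assumes "continuous_on UNIV k" "\<And>x. x \<notin> {p..q} \<Longrightarrow> k x = 0"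
  shows "(k has_integral integral {p..q} k) UNIV"
proof -
  have "(k has_integral integral {p..q} k) {p..q}"
    using assms(1) by (intro integrable_integral integrable_continuous_real continuous_on_subset[OF assms(1)]) auto
  then show ?thesis
    using assms(2) by (rule has_integral_on_superset) auto
qed

lemma nice_zero: assumes "nice R h" "R \<le> norm x" shows "h x = 0"
proof -
  have "\<forall>x. R \<le> norm x \<longrightarrow> h x = 0" using assms(1) unfolding nice_def by (rule conjunct2)
  then show ?thesis using assms(2) by blast
qed

lemma has_integral_superset2:
  fixes f :: "'n::euclidean_space \<Rightarrow> 'a::banach"
  assumes "(f has_integral i) S" "S \<subseteq> T" "\<And>x. x \<in> T \<Longrightarrow> x \<notin> S \<Longrightarrow> f x = 0"
  shows "(f has_integral i) T"
proof -
  have "((\<lambda>x. if x \<in> S then f x else 0) has_integral i) T"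
    using has_integral_restrict[OF assms(2)] assms(1) by blast
  moreover have "((\<lambda>x. if x \<in> S then f x else 0) has_integral i) T = (f has_integral i) T"
    by (rule has_integral_cong) (use assms(3) in auto)
  ultimately show ?thesis by simp
qed

lemma nice_cont: "nice R h \<Longrightarrow> continuous_on UNIV h"
  by (simp add: nice_def)

lemma nice_nz: "nice R h \<Longrightarrow> h x \<noteq> 0 \<Longrightarrow> norm x < R"
  by (meson nice_zero not_le)

lemma nice_nz2: "nice R h \<Longrightarrow> h (a,b) \<noteq> 0 \<Longrightarrow> \<bar>a\<bar> < R \<and> \<bar>b\<bar> < R"
  using nice_nz[of R h "(a,b)"] norm_fst_le[of a b] norm_snd_le[of b a] by auto

lemma divbeam_has_int:
  assumes h: "nice R h" and g: "norm g = 1"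
  shows "((\<lambda>u. h (x + u *\<^sub>R g)) has_integral divbeam g h x) {0..}"
proof -
  let ?N = "norm x + R"
  have c: "continuous_on UNIV (\<lambda>u. h (x + u *\<^sub>R g))"
    by (intro cont_comp[OF nice_cont[OF h]] continuous_intros)
  have z: "h (x + u *\<^sub>R g) = 0" if "u \<notin> {0..?N}" "u \<in> {0..}" for u
  proof -
    have "u > ?N" using that by auto
    have "norm (u *\<^sub>R g) \<le> norm (x + u *\<^sub>R g) + norm x"
      by (metis add_diff_cancel_left' norm_triangle_ineq4)
    then have "R \<le> norm (x + u *\<^sub>R g)" using \<open>u > ?N\<close> g by auto
    then show ?thesis by (rule nice_zero[OF h])
  qed
  have "((\<lambda>u. h (x + u *\<^sub>R g)) has_integral integral {0..?N} (\<lambda>u. h (x + u *\<^sub>R g))) {0..?N}"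
    by (intro integrable_integral integrable_continuous_real continuous_on_subset[OF c]) auto
  then have *: "((\<lambda>u. h (x + u *\<^sub>R g)) has_integral integral {0..?N} (\<lambda>u. h (x + u *\<^sub>R g))) {0..}"
    by (rule has_integral_superset2) (use z in auto)
  then have "divbeam g h x = integral {0..?N} (\<lambda>u. h (x + u *\<^sub>R g))"
    unfolding divbeam_def by (rule integral_unique)
  with * show ?thesis by simp
qed

lemma divbeam_diff:
  assumes "nice R h1" "nice R h2" "norm g = 1"
  shows "divbeam g (\<lambda>y. h1 y - h2 y) x = divbeam g h1 x - divbeam g h2 x"
  unfolding divbeam_def[of g "\<lambda>y. h1 y - h2 y"]
  by (rule integral_unique, rule has_integral_diff[OF divbeam_has_int[OF assms(1,3)] divbeam_has_int[OF assms(2,3)]])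

definition Lam :: "real \<Rightarrow> (real \<times> real \<Rightarrow> real) \<Rightarrow> real \<Rightarrow> real \<Rightarrow> real" where
  "Lam R h t s = integral {-R..R} (\<lambda>y. h (y, s - t*y))"

definition Jf :: "real \<Rightarrow> (real \<times> real \<Rightarrow> real) \<Rightarrow> real \<Rightarrow> real \<Rightarrow> real" where
  "Jf R h t s = integral {-((\<bar>t\<bar>+1)*R)..s} (Lam R h t)"

lemma Lam_cont:
  assumes h: "nice R h"
  shows "continuous_on UNIV (Lam R h t)"
proof -
  have "continuous_on (UNIV \<times> cbox (-R) R) (\<lambda>z. h (snd z, fst z - t * snd z))"
    by (intro cont_comp[OF nice_cont[OF h]] continuous_intros)
  moreover have "(\<lambda>(s, y). h (y, s - t*y)) = (\<lambda>z. h (snd z, fst z - t * snd z))"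
    by auto
  ultimately have "continuous_on UNIV (\<lambda>s. integral (cbox (-R) R) (\<lambda>y. h (y, s - t*y)))"
    by (intro integral_continuous_on_param) simp
  then show ?thesis unfolding Lam_def[abs_def] by simp
qed

lemma Lam_zero:
  assumes h: "nice R h" and s: "(\<bar>t\<bar>+1)*R \<le> \<bar>s\<bar>"
  shows "Lam R h t s = 0"
proof -
  have "h (y, s - t*y) = 0" for y
  proof (rule ccontr)
    assume "h (y, s - t*y) \<noteq> 0"
    from nice_nz2[OF h this] have y: "\<bar>y\<bar> < R" and z: "\<bar>s - t*y\<bar> < R" by auto
    have "\<bar>t*y\<bar> \<le> \<bar>t\<bar>*R" using y by (simp add: abs_mult mult_left_mono)
    moreover have "\<bar>s\<bar> \<le> \<bar>t*y\<bar> + \<bar>s - t*y\<bar>" by linarith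
    ultimately show False using z s by (simp add: algebra_simps)
  qed
  then show ?thesis unfolding Lam_def by simp
qed

lemma Lam_hasint:
  assumes h: "nice R h"
  shows "((\<lambda>y. h (y, s - t*y)) has_integral Lam R h t s) UNIV"
  unfolding Lam_def
proof (rule int_univ)
  show "continuous_on UNIV (\<lambda>y. h (y, s - t * y))"
    by (intro cont_comp[OF nice_cont[OF h]] continuous_intros)
  fix y assume "y \<notin> {-R..R}"
  then show "h (y, s - t * y) = 0" using nice_nz2[OF h, of y "s - t*y"] by force
qed

lemma int_zero_on:
  fixes f :: "'a::euclidean_space \<Rightarrow> real"
  assumes "\<And>x. x \<in> S \<Longrightarrow> f x = 0"
  shows "integral S f = 0"
proof -
  have "integral S f = integral S (\<lambda>_. 0)" by (rule integral_cong) (use assms in auto)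
  then show ?thesis by simp
qed

lemma Jf_low:
  assumes h: "nice R h" and p: "p \<le> -((\<bar>t\<bar>+1)*R)" "p \<le> x"
  shows "integral {p..x} (Lam R h t) = Jf R h t x"
proof (cases "x \<le> -((\<bar>t\<bar>+1)*R)")
  case True
  have "integral {p..x} (Lam R h t) = 0"
    by (rule int_zero_on, rule Lam_zero[OF h]) (use True in auto)
  moreover have "Jf R h t x = 0" unfolding Jf_def
    by (rule int_zero_on, rule Lam_zero[OF h]) (use True in auto)
  ultimately show ?thesis by simp
next
  case False
  have "integral {p..-((\<bar>t\<bar>+1)*R)} (Lam R h t) + integral {-((\<bar>t\<bar>+1)*R)..x} (Lam R h t) = integral {p..x} (Lam R h t)"
    by (rule Henstock_Kurzweil_Integration.integral_combine[where a=p and c="-((\<bar>t\<bar>+1)*R)" and b=x and f="Lam R h t"]) (use p False in \<open>auto intro!: integrable_continuous_real continuous_on_subset[OF Lam_cont[OF h]]\<close>)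
  moreover have "integral {p..-((\<bar>t\<bar>+1)*R)} (Lam R h t) = 0"
    by (rule int_zero_on, rule Lam_zero[OF h]) (use p in auto)
  ultimately show ?thesis unfolding Jf_def by simp
qed

lemma Jf_high:
  assumes h: "nice R h" and R: "R > 0" and q: "(\<bar>t\<bar>+1)*R \<le> q"
  shows "Jf R h t q = Jf R h t ((\<bar>t\<bar>+1)*R)"
proof -
  let ?B = "(\<bar>t\<bar>+1)*R"
  have B: "0 \<le> ?B" using R by simp
  have "integral {-?B..?B} (Lam R h t) + integral {?B..q} (Lam R h t) = integral {-?B..q} (Lam R h t)"
    by (rule Henstock_Kurzweil_Integration.integral_combine[where a="-?B" and c="?B" and b=q and f="Lam R h t"]) (use q B in \<open>auto intro!: integrable_continuous_real continuous_on_subset[OF Lam_cont[OF h]]\<close>)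
  moreover have "integral {?B..q} (Lam R h t) = 0"
    by (rule int_zero_on, rule Lam_zero[OF h]) auto
  ultimately show ?thesis unfolding Jf_def by simp
qed

lemma affine_int:
  fixes f :: "real \<Rightarrow> real"
  assumes f: "continuous_on UNIV f" and a: "a \<noteq> 0" and pq: "p \<le> q"
    and img: "(\<lambda>x. (1/a) * x + - (s/a)) ` {p..q} = {0..U}"
  shows "integral {0..U} (\<lambda>u. f (s + u*a)) = integral {p..q} f / \<bar>a\<bar>"
proof -
  have hi: "(f has_integral integral {p..q} f) (cbox p q)"
    using f by (auto intro!: integrable_integral integrable_continuous_real continuous_on_subset[OF f])
  from has_integral_affinity[OF hi a, of s]
  have "((\<lambda>x. f (a * x + s)) has_integral (1 / \<bar>a\<bar>) * integral {p..q} f)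
          ((\<lambda>x. (1 / a) * x + - ((1 / a) * s)) ` {p..q})" by simp
  moreover have "(\<lambda>x. (1 / a) * x + - ((1 / a) * s)) = (\<lambda>x. (1/a) * x + - (s/a))" by auto
  ultimately have "((\<lambda>x. f (a * x + s)) has_integral (1 / \<bar>a\<bar>) * integral {p..q} f) {0..U}"
    using img by simp
  then have "integral {0..U} (\<lambda>x. f (a * x + s)) = integral {p..q} f / \<bar>a\<bar>"
    by (simp add: integral_unique)
  moreover have "(\<lambda>x. f (a * x + s)) = (\<lambda>u. f (s + u*a))" by (auto simp: algebra_simps)
  ultimately show ?thesis by simp
qed

lemma sub_int:
  assumes h: "nice R h" and R: "R > 0" and a: "a \<noteq> 0"
  shows "integral {0..(\<bar>s\<bar> + (\<bar>t\<bar>+1)*R)/\<bar>a\<bar>} (\<lambda>u. Lam R h t (s + u*a))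
         = (if a > 0 then Jf R h t ((\<bar>t\<bar>+1)*R) / a else 0) - Jf R h t s / a"
proof -
  let ?B = "(\<bar>t\<bar>+1)*R"
  let ?U = "(\<bar>s\<bar> + (\<bar>t\<bar>+1)*R)/\<bar>a\<bar>"
  have B: "0 \<le> ?B" using R by simp
  note Lc = Lam_cont[OF h, of t]
  show ?thesis
  proof (cases "a > 0")
    case True
    let ?q = "s + \<bar>s\<bar> + ?B"
    have img: "(\<lambda>x. (1/a) * x + - (s/a)) ` {s..?q} = {0..?U}"
    proof -
      have "(\<lambda>x. (1/a) * x + - (s/a)) ` {s..?q} = {(1/a) * s + - (s/a) .. (1/a) * ?q + - (s/a)}"
        using True B by (subst image_affinity_atLeastAtMost) auto
      moreover have "(1/a) * s + - (s/a) = 0" by simp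
      moreover have "(1/a) * ?q + - (s/a) = ?U" using True by (simp add: field_simps)
      ultimately show ?thesis by simp
    qed
    have E1: "integral {0..?U} (\<lambda>u. Lam R h t (s + u*a)) = integral {s..?q} (Lam R h t) / \<bar>a\<bar>"
      by (rule affine_int[OF Lc a _ img]) (use B in auto)
    have E2: "integral {min s (-?B)..s} (Lam R h t) + integral {s..?q} (Lam R h t) = integral {min s (-?B)..?q} (Lam R h t)"
      by (rule Henstock_Kurzweil_Integration.integral_combine) (use B in \<open>auto intro!: integrable_continuous_real continuous_on_subset[OF Lc]\<close>)
    have E3: "integral {min s (-?B)..s} (Lam R h t) = Jf R h t s"
      by (rule Jf_low[OF h]) auto
    have E4: "integral {min s (-?B)..?q} (Lam R h t) = Jf R h t ?q"
      by (rule Jf_low[OF h]) (use B in auto)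
    have E5: "Jf R h t ?q = Jf R h t ?B"
      by (rule Jf_high[OF h R]) auto
    have "integral {s..?q} (Lam R h t) = Jf R h t ?B - Jf R h t s" using E2 E3 E4 E5 by linarith
    then show ?thesis using E1 True by (simp add: diff_divide_distrib)
  next
    case False
    then have an: "a < 0" using a by simp
    let ?p = "s - (\<bar>s\<bar> + ?B)"
    have img: "(\<lambda>x. (1/a) * x + - (s/a)) ` {?p..s} = {0..?U}"
    proof -
      have "1/a < 0" using an by simp
      then have "(\<lambda>x. (1/a) * x + - (s/a)) ` {?p..s} = {(1/a) * s + - (s/a) .. (1/a) * ?p + - (s/a)}"
        using B by (subst image_affinity_atLeastAtMost) auto
      moreover have "(1/a) * s + - (s/a) = 0" by simp
      moreover have "(1/a) * ?p + - (s/a) = ?U" using an by (simp add: field_simps)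
      ultimately show ?thesis by simp
    qed
    have E1: "integral {0..?U} (\<lambda>u. Lam R h t (s + u*a)) = integral {?p..s} (Lam R h t) / \<bar>a\<bar>"
      by (rule affine_int[OF Lc a _ img]) (use B in auto)
    moreover have "integral {?p..s} (Lam R h t) = Jf R h t s"
      by (rule Jf_low[OF h]) (use B in auto)
    moreover have "\<bar>a\<bar> = - a" using an by simp
    ultimately show ?thesis using an by simp

  qed
qed

lemma line_fubini:
  assumes h: "nice R h" and R: "R > 0" and g: "norm g = 1"
    and a_def: "a = t * fst g + snd g" and a: "a \<noteq> 0"
  shows "((\<lambda>y. divbeam g h (y, s - t*y)) has_integral
           integral {0..(\<bar>s\<bar> + (\<bar>t\<bar>+1)*R)/\<bar>a\<bar>} (\<lambda>u. Lam R h t (s + u*a))) UNIV"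
proof -
  obtain g1 g2 where gg: "g = (g1, g2)" by (cases g)
  have g1: "\<bar>g1\<bar> \<le> 1" using norm_fst_le[of g1 g2] g gg by simp
  have a_eq: "a = t * g1 + g2" using a_def gg by simp
  define B where "B = (\<bar>t\<bar>+1)*R"
  define U where "U = (\<bar>s\<bar> + B)/\<bar>a\<bar>"
  define Y where "Y = R + U"
  define \<phi> where "\<phi> y u = h (y + u*g1, s - t*y + u*g2)" for y u
  have B0: "0 \<le> B" using R by (simp add: B_def)
  have U0: "0 \<le> U" using B0 by (simp add: U_def)
  have phieq: "h ((y, s - t*y) + u *\<^sub>R g) = \<phi> y u" for y u
    by (simp add: \<phi>_def gg)
  have key: "u < U \<and> \<bar>y\<bar> < Y" if nz: "\<phi> y u \<noteq> 0" and u: "0 \<le> u" for y u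
  proof -
    from nice_nz2[OF h nz[unfolded \<phi>_def]]
    have z1: "\<bar>y + u*g1\<bar> < R" and z2: "\<bar>s - t*y + u*g2\<bar> < R" by auto
    have "\<bar>t*(y + u*g1)\<bar> \<le> \<bar>t\<bar>*R" using z1 by (simp add: abs_mult mult_left_mono)
    moreover have "s + u*a = t*(y + u*g1) + (s - t*y + u*g2)" by (simp add: a_eq algebra_simps)
    ultimately have "\<bar>s + u*a\<bar> < B" using z2 unfolding B_def by (simp add: algebra_simps)
    then have "\<bar>u*a\<bar> < \<bar>s\<bar> + B" by linarith
    then have "u * \<bar>a\<bar> < \<bar>s\<bar> + B" using u by (simp add: abs_mult)
    then have uU: "u < U" unfolding U_def using a by (simp add: pos_less_divide_eq)
    have "\<bar>u*g1\<bar> \<le> u" using u g1 by (simp add: abs_mult mult_left_le)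
    then have "\<bar>y\<bar> < R + U" using z1 uU by linarith
    then show ?thesis using uU by (simp add: Y_def)
  qed
  have cphi: "continuous_on S (\<lambda>z. \<phi> (fst z) (snd z))" for S
    unfolding \<phi>_def by (intro cont_comp[OF nice_cont[OF h]] continuous_intros)
  have cphi2: "continuous_on S (\<lambda>(y, u). \<phi> y u)" for S
    using cphi[of S] by (simp add: case_prod_beta')
  have cphiy: "continuous_on S (\<phi> y)" for y S
    unfolding \<phi>_def by (intro cont_comp[OF nice_cont[OF h]] continuous_intros)
  have beam: "divbeam g h (y, s - t*y) = integral {0..U} (\<phi> y)" for y
  proof -
    have "((\<lambda>u. h ((y, s - t*y) + u *\<^sub>R g)) has_integral divbeam g h (y, s - t*y)) {0..}"
      by (rule divbeam_has_int[OF h g])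
    then have i1: "(\<phi> y has_integral divbeam g h (y, s - t*y)) {0..}"
      unfolding phieq .
    have "(\<phi> y has_integral integral {0..U} (\<phi> y)) {0..U}"
      by (intro integrable_integral integrable_continuous_real cphiy)
    then have "(\<phi> y has_integral integral {0..U} (\<phi> y)) {0..}"
    proof (rule has_integral_superset2)
      fix u assume "u \<in> {0..}" "u \<notin> {0..U}"
      then show "\<phi> y u = 0" using key[of y u] by force
    qed auto
    then show ?thesis using i1 by (metis integral_unique)
  qed
  define G where "G y = integral {0..U} (\<phi> y)" for y
  have Gc: "continuous_on UNIV G"
  proof -
    have "continuous_on UNIV (\<lambda>y. integral (cbox 0 U) (\<phi> y))"
      by (rule integral_continuous_on_param) (rule cphi2)
    then show ?thesis unfolding G_def[abs_def] by simp
  qed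
  have Gz: "G y = 0" if "y \<notin> {-Y..Y}" for y
    unfolding G_def
  proof (rule int_zero_on)
    fix u assume "u \<in> {0..U}"
    then show "\<phi> y u = 0" using key[of y u] that by force
  qed
  have GI: "(G has_integral integral {-Y..Y} G) UNIV"
    by (rule int_univ[OF Gc Gz])
  have swap: "integral (cbox (-Y) Y) (\<lambda>y. integral (cbox 0 U) (\<phi> y)) =
        integral (cbox 0 U) (\<lambda>u. integral (cbox (-Y) Y) (\<lambda>y. \<phi> y u))"
    by (rule integral_swap_continuous) (rule cphi2)
  have inner: "integral {-Y..Y} (\<lambda>y. \<phi> y u) = Lam R h t (s + u*a)" if u: "u \<in> {0..U}" for u
  proof -
    define k where "k y' = h (y', s + u*a - t*y')" for y'
    have kc: "continuous_on UNIV k"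
      unfolding k_def by (intro cont_comp[OF nice_cont[OF h]] continuous_intros)
    have "\<phi> y u = k (y + u*g1)" for y
      unfolding \<phi>_def k_def by (simp add: a_eq algebra_simps)
    then have "integral {-Y..Y} (\<lambda>y. \<phi> y u) = integral {-Y..Y} (\<lambda>y. k (y + u*g1))" by simp
    also have "\<dots> = integral {-Y + u*g1..Y + u*g1} k"
      using integral_shift_real_ivl[of "-Y + u*g1" "u*g1" "Y + u*g1" k] by simp
    also have "\<dots> = integral {-R..R} k"
    proof (rule int_sub[OF kc])
      fix x assume "x \<notin> {-R..R}"
      then show "k x = 0" unfolding k_def using nice_nz2[OF h, of x] by force
    next
      have "\<bar>u*g1\<bar> \<le> U" using u g1 by (auto simp: abs_mult intro: order_trans[OF mult_left_le])
      then show "{-R..R} \<subseteq> {-Y + u*g1..Y + u*g1}" unfolding Y_def by auto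
    qed
    also have "\<dots> = Lam R h t (s + u*a)" unfolding Lam_def k_def by simp
    finally show ?thesis .
  qed
  have "(\<lambda>y. divbeam g h (y, s - t*y)) = G" using beam by (auto simp: G_def)
  moreover have "integral {-Y..Y} G = integral {0..U} (\<lambda>u. Lam R h t (s + u*a))"
  proof -
    have "integral {-Y..Y} G = integral {0..U} (\<lambda>u. integral {-Y..Y} (\<lambda>y. \<phi> y u))"
      using swap unfolding G_def[abs_def] by simp
    also have "\<dots> = integral {0..U} (\<lambda>u. Lam R h t (s + u*a))"
      by (rule integral_cong) (rule inner)
    finally show ?thesis .
  qed
  ultimately show ?thesis using GI unfolding U_def B_def by simp
qed

lemma line_int:
  assumes h: "nice R h" and R: "R > 0" and g: "norm g = 1"
    and a_def: "a = t * fst g + snd g" and a: "a \<noteq> 0"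
  shows "\<exists>C. \<forall>s. ((\<lambda>y. divbeam g h (y, s - t*y)) has_integral (C - Jf R h t s / a)) UNIV"
proof (intro exI allI)
  fix s
  show "((\<lambda>y. divbeam g h (y, s - t*y)) has_integral ((if a > 0 then Jf R h t ((\<bar>t\<bar>+1)*R) / a else 0) - Jf R h t s / a)) UNIV"
    using line_fubini[OF h R g a_def a, of s] sub_int[OF h R a, where s=s and t=t] by simp
qed

lemma nice_lin:
  assumes "nice R F1" "nice R F2"
  shows "nice R (\<lambda>y. \<alpha> * F1 y + \<beta> * F2 y)"
  unfolding nice_def
proof
  show "continuous_on UNIV (\<lambda>y. \<alpha> * F1 y + \<beta> * F2 y)"
    using nice_cont[OF assms(1)] nice_cont[OF assms(2)] by (intro continuous_intros)
  show "\<forall>x. R \<le> norm x \<longrightarrow> \<alpha> * F1 x + \<beta> * F2 x = 0"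
    using nice_zero[OF assms(1)] nice_zero[OF assms(2)] by simp
qed

lemma Lam_lin:
  assumes "nice R F1" "nice R F2"
  shows "Lam R (\<lambda>y. \<alpha> * F1 y + \<beta> * F2 y) t s = \<alpha> * Lam R F1 t s + \<beta> * Lam R F2 t s"
proof -
  have i1: "(\<lambda>y. F1 (y, s - t*y)) integrable_on {-R..R}"
    by (intro integrable_continuous_real cont_comp[OF nice_cont[OF assms(1)]] continuous_intros)
  have i2: "(\<lambda>y. F2 (y, s - t*y)) integrable_on {-R..R}"
    by (intro integrable_continuous_real cont_comp[OF nice_cont[OF assms(2)]] continuous_intros)
  show ?thesis unfolding Lam_def
    by (subst Henstock_Kurzweil_Integration.integral_add) (use i1 i2 in \<open>auto intro: integrable_on_mult_right\<close>)
qed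

lemma Jf_lin:
  assumes "nice R F1" "nice R F2"
  shows "Jf R (\<lambda>y. \<alpha> * F1 y + \<beta> * F2 y) t s = \<alpha> * Jf R F1 t s + \<beta> * Jf R F2 t s"
proof -
  have i1: "Lam R F1 t integrable_on {-((\<bar>t\<bar>+1)*R)..s}"
    by (intro integrable_continuous_real continuous_on_subset[OF Lam_cont[OF assms(1)]]) auto
  have i2: "Lam R F2 t integrable_on {-((\<bar>t\<bar>+1)*R)..s}"
    by (intro integrable_continuous_real continuous_on_subset[OF Lam_cont[OF assms(2)]]) auto
  show ?thesis unfolding Jf_def Lam_lin[OF assms]
    by (subst Henstock_Kurzweil_Integration.integral_add) (use i1 i2 in \<open>auto intro: integrable_on_mult_right\<close>)
qed

lemma comb_const:
  fixes m :: nat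
  assumes F1: "nice R F1" and F2: "nice R F2" and R: "R > 0"
    and g: "\<And>i. i < m \<Longrightarrow> norm (gam i) = 1"
    and a: "\<And>i. i < m \<Longrightarrow> t * fst (gam i) + snd (gam i) \<noteq> 0"
    and S: "\<And>x. (\<Sum>i<m. c i * divbeam (gam i) (\<lambda>y. \<alpha> i * F1 y + \<beta> i * F2 y) x) = 0"
  shows "\<exists>K. \<forall>s. (\<Sum>i<m. (c i / (t * fst (gam i) + snd (gam i))) * (\<alpha> i * Jf R F1 t s + \<beta> i * Jf R F2 t s)) = K"
proof -
  let ?a = "\<lambda>i. t * fst (gam i) + snd (gam i)"
  let ?h = "\<lambda>i y. \<alpha> i * F1 y + \<beta> i * F2 y"
  have ex: "\<forall>i. \<exists>C. i < m \<longrightarrow> (\<forall>s. ((\<lambda>y. divbeam (gam i) (?h i) (y, s - t*y)) has_integral (C - Jf R (?h i) t s / ?a i)) UNIV)"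
  proof
    fix i
    show "\<exists>C. i < m \<longrightarrow> (\<forall>s. ((\<lambda>y. divbeam (gam i) (?h i) (y, s - t*y)) has_integral (C - Jf R (?h i) t s / ?a i)) UNIV)"
    proof (cases "i < m")
      case True
      from line_int[OF nice_lin[OF F1 F2] R g[OF True] refl a[OF True]] show ?thesis by blast
    qed simp
  qed
  from choice[OF ex] obtain C where C0: "\<forall>i. i < m \<longrightarrow> (\<forall>s. ((\<lambda>y. divbeam (gam i) (?h i) (y, s - t*y)) has_integral (C i - Jf R (?h i) t s / ?a i)) UNIV)"
    by blast
  have C: "((\<lambda>y. divbeam (gam i) (?h i) (y, s - t*y)) has_integral (C i - Jf R (?h i) t s / ?a i)) UNIV" if "i < m" for i s
    using C0 that by blast
  have "(\<Sum>i<m. (c i / ?a i) * (\<alpha> i * Jf R F1 t s + \<beta> i * Jf R F2 t s)) = (\<Sum>i<m. c i * C i)" for s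
  proof -
    have "((\<lambda>y. \<Sum>i<m. c i * divbeam (gam i) (?h i) (y, s - t*y)) has_integral (\<Sum>i<m. c i * (C i - Jf R (?h i) t s / ?a i))) UNIV"
      by (rule has_integral_sum) (auto intro!: has_integral_mult_right C)
    moreover have "((\<lambda>y. \<Sum>i<m. c i * divbeam (gam i) (?h i) (y, s - t*y)) has_integral 0) UNIV"
      using S by simp
    ultimately have "(\<Sum>i<m. c i * (C i - Jf R (?h i) t s / ?a i)) = 0"
      using has_integral_unique by blast
    moreover have "(\<Sum>i<m. c i * (C i - Jf R (?h i) t s / ?a i)) =
        (\<Sum>i<m. c i * C i) - (\<Sum>i<m. (c i / ?a i) * (\<alpha> i * Jf R F1 t s + \<beta> i * Jf R F2 t s))"
    proof -
      have "c i * (C i - Jf R (?h i) t s / ?a i) = c i * C i - (c i / ?a i) * (\<alpha> i * Jf R F1 t s + \<beta> i * Jf R F2 t s)" for i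
        by (simp add: Jf_lin[OF F1 F2] right_diff_distrib)
      then show ?thesis by (simp add: sum_subtractf)
    qed
    ultimately show ?thesis by simp
  qed
  then show ?thesis by blast
qed

lemma Lam_from_Jf:
  assumes h: "nice R h" and R: "R > 0" and J: "\<And>s. Jf R h t s = 0"
  shows "Lam R h t s = 0"
proof (cases "(\<bar>t\<bar>+1)*R \<le> \<bar>s\<bar>")
  case True then show ?thesis by (rule Lam_zero[OF h])
next
  case False
  let ?B = "(\<bar>t\<bar>+1)*R"
  have sI: "s \<in> interior {-?B..?B}" using False by auto
  have "((\<lambda>u. integral {-?B..u} (Lam R h t)) has_vector_derivative Lam R h t s) (at s within {-?B..?B})"
    by (rule integral_has_vector_derivative) (use False in \<open>auto intro: continuous_on_subset[OF Lam_cont[OF h]]\<close>)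
  then have "((\<lambda>u. integral {-?B..u} (Lam R h t)) has_vector_derivative Lam R h t s) (at s)"
    using at_within_interior[OF sI] by simp
  moreover have "(\<lambda>u. integral {-?B..u} (Lam R h t)) = (\<lambda>_. 0)"
    using J unfolding Jf_def by auto
  ultimately have "((\<lambda>_. 0) has_vector_derivative Lam R h t s) (at s)" by simp
  moreover have "((\<lambda>_::real. 0::real) has_vector_derivative 0) (at s)" by (rule has_vector_derivative_const)
  ultimately show ?thesis using vector_derivative_unique_at by metis
qed

lemma moment_zero:
  assumes f: "nice R f" and R: "R > 0" and L: "\<And>s. Lam R f t s = 0" and phi: "continuous_on UNIV \<phi>"
  shows "integral (cbox (-R,-R) (R,R)) (\<lambda>x. f x * \<phi> (t * fst x + snd x)) = 0"
proof -
  let ?B = "(\<bar>t\<bar>+1)*R"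
  note fc = nice_cont[OF f]
  have "integral (cbox (-R,-R) (R,R)) (\<lambda>x. f x * \<phi> (t * fst x + snd x)) =
        integral (cbox (-R) R) (\<lambda>x1. integral (cbox (-R) R) (\<lambda>x2. f (x1, x2) * \<phi> (t * x1 + x2)))"
    by (subst integral_prod_continuous) (auto intro!: continuous_intros cont_comp[OF fc] cont_comp[OF phi])
  also have "\<dots> = integral {-R..R} (\<lambda>x1. integral {-?B..?B} (\<lambda>s. f (x1, s - t*x1) * \<phi> s))"
    unfolding cbox_interval
  proof (rule integral_cong)
    fix x1 assume x1: "x1 \<in> {-R..R}"
    define k where "k s = f (x1, s - t*x1) * \<phi> s" for s
    have kc: "continuous_on UNIV k" unfolding k_def
      by (auto intro!: continuous_intros cont_comp[OF fc] cont_comp[OF phi])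
    have "integral {-R..R} (\<lambda>x2. f (x1, x2) * \<phi> (t * x1 + x2)) = integral {-R..R} (\<lambda>x2. k (x2 + t*x1))"
      unfolding k_def by (simp add: algebra_simps)
    also have "\<dots> = integral {-R + t*x1..R + t*x1} k"
      using integral_shift_real_ivl[of "-R + t*x1" "t*x1" "R + t*x1" k] by simp
    also have "\<dots> = integral {-?B..?B} k"
    proof (rule int_sub[OF kc, symmetric])
      fix s assume "s \<notin> {-R + t*x1..R + t*x1}"
      then show "k s = 0" unfolding k_def using nice_nz2[OF f, of x1 "s - t*x1"] by force
    next
      have "\<bar>x1\<bar> \<le> R" using x1 by auto
      then have "\<bar>t*x1\<bar> \<le> \<bar>t\<bar> * R" by (simp add: abs_mult mult_left_mono)
      then show "{-R + t*x1..R + t*x1} \<subseteq> {-?B..?B}" by (auto simp: algebra_simps)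
    qed
    finally show "integral {-R..R} (\<lambda>x2. f (x1, x2) * \<phi> (t * x1 + x2)) = integral {-?B..?B} (\<lambda>s. f (x1, s - t*x1) * \<phi> s)"
      unfolding k_def .
  qed
  also have "\<dots> = integral {-?B..?B} (\<lambda>s. integral {-R..R} (\<lambda>x1. f (x1, s - t*x1) * \<phi> s))"
  proof -
    have cc: "continuous_on (cbox (-R, -?B) (R, ?B)) (\<lambda>(x1, s). f (x1, s - t*x1) * \<phi> s)"
      unfolding case_prod_beta' by (auto intro!: continuous_intros cont_comp[OF fc] cont_comp[OF phi])
    show ?thesis using integral_swap_continuous[OF cc] by simp
  qed
  also have "\<dots> = integral {-?B..?B} (\<lambda>s. Lam R f t s * \<phi> s)"
    unfolding Lam_def by simp
  also have "\<dots> = 0" using L by simp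
  finally show ?thesis .
qed

inductive pol :: "(real \<times> real \<Rightarrow> real) \<Rightarrow> bool" where
  pc: "pol (\<lambda>x. c)"
| pa: "pol p \<Longrightarrow> pol q \<Longrightarrow> pol (\<lambda>x. p x + q x)"
| p1: "pol p \<Longrightarrow> pol (\<lambda>x. fst x * p x)"
| p2: "pol p \<Longrightarrow> pol (\<lambda>x. snd x * p x)"

lemma pol_scale: "pol p \<Longrightarrow> pol (\<lambda>x. c * p x)"
proof (induction rule: pol.induct)
  case (pc c')
  then show ?case using pol.pc by simp
next
  case (pa p q)
  then show ?case using pol.pa[OF pa.IH] by (simp add: distrib_left)
next
  case (p1 p)
  then show ?case using pol.p1[OF p1.IH] by (simp add: mult.left_commute)
next
  case (p2 p)
  then show ?case using pol.p2[OF p2.IH] by (simp add: mult.left_commute)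
qed

lemma pol_mult: "pol p \<Longrightarrow> pol q \<Longrightarrow> pol (\<lambda>x. p x * q x)"
proof (induction rule: pol.induct)
  case (pc c)
  then show ?case by (rule pol_scale)
next
  case (pa p1 p2)
  then show ?case using pol.pa[OF pa.IH] by (simp add: distrib_right)
next
  case (p1 p)
  then show ?case using pol.p1[OF p1.IH] by (simp add: mult.assoc)
next
  case (p2 p)
  then show ?case using pol.p2[OF p2.IH] by (simp add: mult.assoc)
qed

lemma pol_cont: "pol p \<Longrightarrow> continuous_on S p"
  by (induction rule: pol.induct) (auto intro!: continuous_intros)

lemma pol_moment:
  fixes f :: "real \<times> real \<Rightarrow> real"
  assumes fc: "continuous_on UNIV f"
    and M: "\<And>j l. integral (cbox (-R,-R) (R,R)) (\<lambda>x. f x * fst x ^ j * snd x ^ l) = 0"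
  shows "pol p \<Longrightarrow> \<forall>j l. integral (cbox (-R,-R) (R,R)) (\<lambda>x. f x * p x * fst x ^ j * snd x ^ l) = 0"
proof (induction rule: pol.induct)
  case (pc c)
  show ?case
  proof (intro allI)
    fix j l
    have "integral (cbox (-R,-R) (R,R)) (\<lambda>x. f x * c * fst x ^ j * snd x ^ l) =
          integral (cbox (-R,-R) (R,R)) (\<lambda>x. c * (f x * fst x ^ j * snd x ^ l))"
      by (simp add: algebra_simps)
    also have "\<dots> = 0" using M by simp
    finally show "integral (cbox (-R,-R) (R,R)) (\<lambda>x. f x * c * fst x ^ j * snd x ^ l) = 0" .
  qed
next
  case (pa p q)
  show ?case
  proof (intro allI)
    fix j l
    have ip: "(\<lambda>x. f x * p x * fst x ^ j * snd x ^ l) integrable_on cbox (-R,-R) (R,R)"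
      using pa.hyps(1) by (intro integrable_continuous continuous_intros pol_cont continuous_on_subset[OF fc]) auto
    have iq: "(\<lambda>x. f x * q x * fst x ^ j * snd x ^ l) integrable_on cbox (-R,-R) (R,R)"
      using pa.hyps(2) by (intro integrable_continuous continuous_intros pol_cont continuous_on_subset[OF fc]) auto
    have "integral (cbox (-R,-R) (R,R)) (\<lambda>x. f x * (p x + q x) * fst x ^ j * snd x ^ l) =
          integral (cbox (-R,-R) (R,R)) (\<lambda>x. f x * p x * fst x ^ j * snd x ^ l + f x * q x * fst x ^ j * snd x ^ l)"
      by (simp add: algebra_simps)
    also have "\<dots> = 0"
      using Henstock_Kurzweil_Integration.integral_add[OF ip iq] pa.IH by simp
    finally show "integral (cbox (-R,-R) (R,R)) (\<lambda>x. f x * (p x + q x) * fst x ^ j * snd x ^ l) = 0" .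
  qed
next
  case (p1 p)
  show ?case
  proof (intro allI)
    fix j l
    have "integral (cbox (-R,-R) (R,R)) (\<lambda>x. f x * (fst x * p x) * fst x ^ j * snd x ^ l) =
          integral (cbox (-R,-R) (R,R)) (\<lambda>x. f x * p x * fst x ^ Suc j * snd x ^ l)"
      by (simp add: algebra_simps)
    then show "integral (cbox (-R,-R) (R,R)) (\<lambda>x. f x * (fst x * p x) * fst x ^ j * snd x ^ l) = 0"
      using p1.IH[rule_format, of "Suc j" l] by simp
  qed
next
  case (p2 p)
  show ?case
  proof (intro allI)
    fix j l
    have "integral (cbox (-R,-R) (R,R)) (\<lambda>x. f x * (snd x * p x) * fst x ^ j * snd x ^ l) =
          integral (cbox (-R,-R) (R,R)) (\<lambda>x. f x * p x * fst x ^ j * snd x ^ Suc l)"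
      by (simp add: algebra_simps)
    then show "integral (cbox (-R,-R) (R,R)) (\<lambda>x. f x * (snd x * p x) * fst x ^ j * snd x ^ l) = 0"
      using p2.IH[rule_format, of j "Suc l"] by simp
  qed
qed

lemma zero_from_moments:
  assumes f: "nice R f" and R: "R > 0"
    and M: "\<And>j l. integral (cbox (-R,-R) (R,R)) (\<lambda>x. f x * fst x ^ j * snd x ^ l) = 0"
  shows "f x = 0"
proof -
  let ?K = "cbox (-R,-R) (R,R) :: (real \<times> real) set"
  note fc = nice_cont[OF f]
  have Pint: "integral ?K (\<lambda>x. f x * p x) = 0" if "pol p" for p
    using pol_moment[OF fc M that, rule_format, of 0 0] by simp
  have cK: "compact ?K" by simp
  have int_abs: "(\<lambda>x. \<bar>f x\<bar>) integrable_on ?K"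
    by (intro integrable_continuous continuous_intros continuous_on_subset[OF fc]) auto
  have int_sq: "(\<lambda>x. f x * f x) integrable_on ?K"
    by (intro integrable_continuous continuous_intros continuous_on_subset[OF fc]) auto
  define A where "A = integral ?K (\<lambda>x. \<bar>f x\<bar>)"
  have A0: "0 \<le> A" unfolding A_def by (rule integral_nonneg[OF int_abs]) auto
  have bound: "integral ?K (\<lambda>x. f x * f x) \<le> e * A" if e: "0 < e" for e
  proof -
    obtain p where p: "pol p" and pe: "\<forall>x\<in>?K. \<bar>f x - p x\<bar> < e"
      using Stone_Weierstrass_HOL[of ?K pol f e] cK pol.pc pol_cont pol.pa pol_mult
        continuous_on_subset[OF fc] e
    proof -
      have sep: "\<exists>g. pol g \<and> g x \<noteq> g y" if "x \<noteq> y" for x y :: "real \<times> real"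
      proof (cases "fst x = fst y")
        case True
        then have "snd x \<noteq> snd y" using that by (simp add: prod_eq_iff)
        then show ?thesis using pol.p2[OF pol.pc[of 1]] by (intro exI[of _ "\<lambda>x. snd x * 1"]) auto
      next
        case False
        then show ?thesis using pol.p1[OF pol.pc[of 1]] by (intro exI[of _ "\<lambda>x. fst x * 1"]) auto
      qed
      have "\<exists>g. pol g \<and> (\<forall>x\<in>?K. \<bar>f x - g x\<bar> < e)"
        by (rule Stone_Weierstrass_HOL[of ?K pol f e])
           (use cK pol.pc pol_cont pol.pa pol_mult continuous_on_subset[OF fc] e sep in auto)
      then show ?thesis using that by blast
    qed
    have int_p: "(\<lambda>x. f x * p x) integrable_on ?K"
      using p by (intro integrable_continuous continuous_intros pol_cont continuous_on_subset[OF fc]) auto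
    have int_d: "(\<lambda>x. f x * (f x - p x)) integrable_on ?K"
      using p by (intro integrable_continuous continuous_intros pol_cont continuous_on_subset[OF fc]) auto
    have "integral ?K (\<lambda>x. f x * f x) = integral ?K (\<lambda>x. f x * (f x - p x) + f x * p x)"
      by (simp add: algebra_simps)
    also have "\<dots> = integral ?K (\<lambda>x. f x * (f x - p x))"
      using Henstock_Kurzweil_Integration.integral_add[OF int_d int_p] Pint[OF p] by simp
    also have "\<dots> \<le> integral ?K (\<lambda>x. e * \<bar>f x\<bar>)"
    proof (rule integral_le[OF int_d])
      show "(\<lambda>x. e * \<bar>f x\<bar>) integrable_on ?K" using int_abs by (rule integrable_on_mult_right)
      fix x assume "x \<in> ?K"
      then have "\<bar>f x - p x\<bar> \<le> e" using pe by force
      then have "\<bar>f x\<bar> * \<bar>f x - p x\<bar> \<le> \<bar>f x\<bar> * e" by (simp add: mult_left_mono)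
      moreover have "f x * (f x - p x) \<le> \<bar>f x\<bar> * \<bar>f x - p x\<bar>"
        by (metis abs_ge_self abs_mult)
      ultimately show "f x * (f x - p x) \<le> e * \<bar>f x\<bar>" by (simp add: mult.commute)
    qed
    also have "\<dots> = e * A" unfolding A_def by simp
    finally show ?thesis .
  qed
  have le0: "integral ?K (\<lambda>x. f x * f x) \<le> 0"
  proof (rule field_le_epsilon)
    fix e :: real assume e: "0 < e"
    have "0 < e / (A + 1)" using e A0 by simp
    then have "integral ?K (\<lambda>x. f x * f x) \<le> (e / (A + 1)) * A" by (rule bound)
    also have "\<dots> \<le> e" using e A0 by (simp add: field_simps)
    finally show "integral ?K (\<lambda>x. f x * f x) \<le> 0 + e" by simp
  qed
  have ge0: "0 \<le> integral ?K (\<lambda>x. f x * f x)"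
    by (rule integral_nonneg[OF int_sq]) auto
  have hi: "((\<lambda>x. f x * f x) has_integral 0) ?K"
    using le0 ge0 int_sq by (metis antisym has_integral_integral)
  show ?thesis
  proof (cases "x \<in> ?K")
    case True
    have "f x * f x = 0"
    proof (rule has_integral_0_cbox_imp_0[OF _ _ hi _ True])
      show "continuous_on ?K (\<lambda>x. f x * f x)"
        by (intro continuous_intros continuous_on_subset[OF fc]) auto
      show "box (-R, -R) (R, R) \<noteq> {}" using R by (auto simp: box_ne_empty inner_Pair Basis_prod_def)
    qed auto
    then show ?thesis by simp
  next
    case False
    obtain a b where x: "x = (a,b)" by (cases x)
    with False have "R < \<bar>a\<bar> \<or> R < \<bar>b\<bar>" by (auto simp: cbox_Pair_iff)
    then have "R \<le> norm x" unfolding x using norm_fst_le[of a b] norm_snd_le[of b a] by auto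
    then show ?thesis by (rule nice_zero[OF f])
  qed
qed

lemma moments_vanish:
  assumes f: "nice R f" and T: "infinite T"
    and Z: "\<And>t n. t \<in> T \<Longrightarrow> integral (cbox (-R,-R) (R,R)) (\<lambda>x. f x * (t * fst x + snd x) ^ n) = 0"
  shows "integral (cbox (-R,-R) (R,R)) (\<lambda>x. f x * fst x ^ j * snd x ^ l) = 0"
proof -
  let ?K = "cbox (-R,-R) (R,R) :: (real \<times> real) set"
  note fc = nice_cont[OF f]
  define n where "n = j + l"
  define M where "M i k = integral ?K (\<lambda>x. f x * fst x ^ i * snd x ^ k)" for i k
  have expand: "integral ?K (\<lambda>x. f x * (t * fst x + snd x) ^ n) = (\<Sum>i\<le>n. (of_nat (n choose i) * M i (n-i)) * t ^ i)" for t
  proof -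
    have "(\<lambda>x. f x * (t * fst x + snd x) ^ n) = (\<lambda>x. \<Sum>i\<le>n. (of_nat (n choose i) * t ^ i) * (f x * fst x ^ i * snd x ^ (n-i)))"
    proof
      fix x
      have "(t * fst x + snd x) ^ n = (\<Sum>i\<le>n. of_nat (n choose i) * (t * fst x) ^ i * snd x ^ (n-i))"
        by (rule binomial_ring)
      then show "f x * (t * fst x + snd x) ^ n = (\<Sum>i\<le>n. (of_nat (n choose i) * t ^ i) * (f x * fst x ^ i * snd x ^ (n-i)))"
        by (simp add: sum_distrib_left power_mult_distrib mult_ac)
    qed
    then have "integral ?K (\<lambda>x. f x * (t * fst x + snd x) ^ n) = (\<Sum>i\<le>n. integral ?K (\<lambda>x. (of_nat (n choose i) * t ^ i) * (f x * fst x ^ i * snd x ^ (n-i))))"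
      by (simp add: Henstock_Kurzweil_Integration.integral_sum integrable_continuous continuous_intros continuous_on_subset[OF fc])
    also have "\<dots> = (\<Sum>i\<le>n. (of_nat (n choose i) * t ^ i) * M i (n-i))"
      unfolding M_def by (simp only: Henstock_Kurzweil_Integration.integral_mult_right)
    also have "\<dots> = (\<Sum>i\<le>n. (of_nat (n choose i) * M i (n-i)) * t ^ i)"
      by (simp add: mult_ac)
    finally show ?thesis .
  qed
  define P where "P = (\<Sum>i\<le>n. monom (of_nat (n choose i) * M i (n-i)) i)"
  have polyP: "poly P t = (\<Sum>i\<le>n. (of_nat (n choose i) * M i (n-i)) * t ^ i)" for t
    unfolding P_def by (simp add: poly_sum poly_monom)
  have "P = 0"
  proof (rule ccontr)
    assume "P \<noteq> 0"
    then have "finite {t. poly P t = 0}" by (rule poly_roots_finite)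
    moreover have "T \<subseteq> {t. poly P t = 0}" using Z[of _ n] expand polyP by auto
    ultimately show False using T finite_subset by blast
  qed
  then have "coeff P j = 0" by simp
  moreover have "coeff P j = of_nat (n choose j) * M j (n-j)"
    unfolding P_def by (rule coeff_sum_monom) (simp add: n_def)
  moreover have "(n choose j) \<noteq> 0" by (simp add: n_def)
  ultimately have "M j (n - j) = 0" by simp
  then show ?thesis by (simp add: M_def n_def)
qed

definition good :: "nat \<Rightarrow> (nat \<Rightarrow> real) \<Rightarrow> (nat \<Rightarrow> real \<times> real) \<Rightarrow> real \<times> real \<Rightarrow> bool" where
  "good m c gam n \<longleftrightarrow> (\<forall>i<m. n \<bullet> gam i \<noteq> 0) \<and> gamma_vec m c gam n \<noteq> 0"

lemma gamma_vec_scale: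
  assumes k: "k \<noteq> 0"
  shows "gamma_vec m c gam (k *\<^sub>R n) = (1/k) *\<^sub>R gamma_vec m c gam n"
proof -
  have "(c i / ((k *\<^sub>R n) \<bullet> gam i)) *\<^sub>R gam i = (1/k) *\<^sub>R ((c i / (n \<bullet> gam i)) *\<^sub>R gam i)" for i
    by simp
  then show ?thesis unfolding gamma_vec_def by (simp add: scaleR_sum_right)
qed

lemma good_scale:
  assumes k: "k \<noteq> 0"
  shows "good m c gam (k *\<^sub>R n) \<longleftrightarrow> good m c gam n"
  unfolding good_def gamma_vec_scale[OF k] using k by simp

lemma gamma_vec_prod:
  fixes m :: nat and a :: "nat \<Rightarrow> real"
  assumes a: "\<And>i. i < m \<Longrightarrow> n \<bullet> gam i = a i" and nz: "\<And>i. i < m \<Longrightarrow> a i \<noteq> 0"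
  shows "gamma_vec m c gam n = - (1 / (\<Prod>j<m. a j)) *\<^sub>R (\<Sum>i<m. (c i * (\<Prod>j\<in>{..<m}-{i}. a j)) *\<^sub>R gam i)"
proof -
  have "c i / (n \<bullet> gam i) = (1 / (\<Prod>j<m. a j)) * (c i * (\<Prod>j\<in>{..<m}-{i}. a j))" if i: "i < m" for i
  proof -
    have "(\<Prod>j<m. a j) = a i * (\<Prod>j\<in>{..<m}-{i}. a j)"
      using i by (subst prod.remove[of "{..<m}" i]) auto
    moreover have "(\<Prod>j\<in>{..<m}-{i}. a j) \<noteq> 0" using nz by auto
    ultimately show ?thesis using a[OF i] nz[OF i] by (simp add: field_simps)
  qed
  then have "(\<Sum>i<m. (c i / (n \<bullet> gam i)) *\<^sub>R gam i) = (\<Sum>i<m. (1 / (\<Prod>j<m. a j)) *\<^sub>R ((c i * (\<Prod>j\<in>{..<m}-{i}. a j)) *\<^sub>R gam i))"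
    by (intro sum.cong) auto
  then show ?thesis unfolding gamma_vec_def by (simp add: scaleR_sum_right sum_negf)
qed

lemma bad_finite:
  fixes m :: nat and p q :: "real \<times> real"
  assumes g0: "good m c gam (p + w0 *\<^sub>R q)"
  shows "finite {w. \<not> good m c gam (p + w *\<^sub>R q)}"
proof -
  define L where "L j = [:p \<bullet> gam j, q \<bullet> gam j:]" for j
  have La: "(p + w *\<^sub>R q) \<bullet> gam j = poly (L j) w" for w j
    unfolding L_def by (simp add: inner_add_left algebra_simps)
  define Pv where "Pv w = (\<Sum>i<m. (c i * (\<Prod>j\<in>{..<m}-{i}. poly (L j) w)) *\<^sub>R gam i)" for w
  define P1 where "P1 = (\<Sum>i<m. smult (c i * fst (gam i)) (\<Prod>j\<in>{..<m}-{i}. L j))"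
  define P2 where "P2 = (\<Sum>i<m. smult (c i * snd (gam i)) (\<Prod>j\<in>{..<m}-{i}. L j))"
  have P1v: "poly P1 w = fst (Pv w)" for w
    unfolding P1_def Pv_def by (simp add: poly_sum poly_prod fst_sum mult_ac)
  have P2v: "poly P2 w = snd (Pv w)" for w
    unfolding P2_def Pv_def by (simp add: poly_sum poly_prod snd_sum mult_ac)
  have gv: "gamma_vec m c gam (p + w *\<^sub>R q) = - (1 / (\<Prod>j<m. poly (L j) w)) *\<^sub>R Pv w"
    if "\<And>i. i < m \<Longrightarrow> poly (L i) w \<noteq> 0" for w
    unfolding Pv_def by (rule gamma_vec_prod[OF La that])
  have L0: "poly (L i) w0 \<noteq> 0" if "i < m" for i
    using g0 that unfolding good_def La by auto
  have Pv0: "Pv w0 \<noteq> 0"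
    using g0 gv[OF L0] unfolding good_def by auto
  have sub: "{w. \<not> good m c gam (p + w *\<^sub>R q)} \<subseteq> (\<Union>i<m. {w. poly (L i) w = 0}) \<union> {w. Pv w = 0}"
  proof
    fix w assume "w \<in> {w. \<not> good m c gam (p + w *\<^sub>R q)}"
    then have bad: "\<not> good m c gam (p + w *\<^sub>R q)" by simp
    show "w \<in> (\<Union>i<m. {w. poly (L i) w = 0}) \<union> {w. Pv w = 0}"
    proof (cases "\<exists>i<m. poly (L i) w = 0")
      case True then show ?thesis by auto
    next
      case False
      then have nz: "\<And>i. i < m \<Longrightarrow> poly (L i) w \<noteq> 0" by auto
      then have "gamma_vec m c gam (p + w *\<^sub>R q) = 0" using bad unfolding good_def La by auto
      moreover have "(\<Prod>j<m. poly (L j) w) \<noteq> 0" using nz by auto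
      ultimately have "Pv w = 0" using gv[OF nz] by simp
      then show ?thesis by auto
    qed
  qed
  have fin1: "finite (\<Union>i<m. {w. poly (L i) w = 0})"
  proof (intro finite_UN_I)
    fix i assume "i \<in> {..<m}"
    then have "poly (L i) w0 \<noteq> 0" using L0 by simp
    then have "L i \<noteq> 0" by auto
    then show "finite {w. poly (L i) w = 0}" by (rule poly_roots_finite)
  qed auto
  have fin2: "finite {w. Pv w = 0}"
  proof (cases "fst (Pv w0) = 0")
    case False
    then have "P1 \<noteq> 0" using P1v[of w0] by auto
    then have "finite {w. poly P1 w = 0}" by (rule poly_roots_finite)
    moreover have "{w. Pv w = 0} \<subseteq> {w. poly P1 w = 0}" using P1v by auto
    ultimately show ?thesis by (rule finite_subset[rotated])
  next
    case True
    then have "snd (Pv w0) \<noteq> 0" using Pv0 by (simp add: prod_eq_iff)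
    then have "P2 \<noteq> 0" using P2v[of w0] by auto
    then have "finite {w. poly P2 w = 0}" by (rule poly_roots_finite)
    moreover have "{w. Pv w = 0} \<subseteq> {w. poly P2 w = 0}" using P2v by auto
    ultimately show ?thesis by (rule finite_subset[rotated])
  qed
  show ?thesis using sub fin1 fin2 by (meson finite_Un finite_subset)
qed

lemma good_T_infinite:
  fixes m :: nat
  assumes n1: "norm psi = 1" and Z: "psi \<notin> Z1 m gam" and gv: "gamma_vec m c gam psi \<noteq> 0"
  shows "infinite {t. good m c gam (t, 1)}"
proof -
  have gpsi: "good m c gam psi"
    using Z gv n1 unfolding good_def Z1_def by auto
  have infU: "infinite (UNIV :: real set)" by (rule infinite_UNIV_char_0)
  show ?thesis
  proof (cases "snd psi = 0")
    case False
    have eq: "(fst psi / snd psi, 1) = (1 / snd psi) *\<^sub>R psi"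
      using False by (simp add: prod_eq_iff)
    have "good m c gam ((0,1) + (fst psi / snd psi) *\<^sub>R (1,0))"
      using gpsi good_scale[of "1 / snd psi" m c gam psi] False eq by simp
    from bad_finite[OF this] have fin: "finite {w. \<not> good m c gam ((0,1) + w *\<^sub>R (1,0))}" .
    have "{w. \<not> good m c gam ((0,1) + w *\<^sub>R (1,0))} = - {t. good m c gam (t, 1)}"
      by auto
    with fin infU show ?thesis by (metis Compl_partition2 finite_Un)
  next
    case True
    then have f0: "fst psi \<noteq> 0" using n1 by (metis norm_Pair norm_zero prod.collapse real_sqrt_zero zero_neq_one norm_zero power2_eq_square mult_zero_left add_0_left real_sqrt_eq_zero_cancel_iff power_zero_numeral)
    have eq: "(1, 0) = (1 / fst psi) *\<^sub>R psi"
      using True f0 by (simp add: prod_eq_iff)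
    have e2: "((1::real),(0::real)) + 0 *\<^sub>R (0,1) = (1 / fst psi) *\<^sub>R psi" using eq by (simp add: zero_prod_def)
    have "good m c gam ((1,0) + 0 *\<^sub>R (0,1))"
      unfolding e2 using gpsi good_scale[of "1 / fst psi" m c gam psi] f0 by simp
    from bad_finite[OF this] have fin: "finite {w. \<not> good m c gam ((1,0) + w *\<^sub>R (0,1))}" .
    let ?W = "{w. good m c gam ((1,0) + w *\<^sub>R (0,1))} - {0}"
    have "infinite {w. good m c gam ((1,0) + w *\<^sub>R (0,1))}"
    proof
      assume "finite {w. good m c gam ((1,0) + w *\<^sub>R (0,1))}"
      with fin have "finite ({w. good m c gam ((1,0) + w *\<^sub>R (0,1))} \<union> {w. \<not> good m c gam ((1,0) + w *\<^sub>R (0,1))})"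
        by simp
      moreover have "{w. good m c gam ((1,0) + w *\<^sub>R (0,1))} \<union> {w. \<not> good m c gam ((1,0) + w *\<^sub>R (0,1))} = UNIV"
        by auto
      ultimately show False using infU by metis
    qed
    then have Winf: "infinite ?W" by simp
    have inj: "inj_on (\<lambda>w. 1 / w) ?W" by (auto simp: inj_on_def)
    have "(\<lambda>w. 1 / w) ` ?W \<subseteq> {t. good m c gam (t, 1)}"
    proof
      fix t assume "t \<in> (\<lambda>w. 1 / w) ` ?W"
      then obtain w where w: "w \<in> ?W" and t: "t = 1 / w" by auto
      then have w0: "w \<noteq> 0" and gw: "good m c gam (1, w)" by auto
      have "(t, 1) = (1 / w) *\<^sub>R (1, w)" using t w0 by simp
      then show "t \<in> {t. good m c gam (t, 1)}"
        using good_scale[of "1/w" m c gam "(1, w)"] w0 gw by simp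
    qed
    moreover have "infinite ((\<lambda>w. 1 / w) ` ?W)" using Winf inj finite_imageD by blast
    ultimately show ?thesis using infinite_super by blast
  qed
qed

lemma main_zero:
  fixes m :: nat
  assumes R: "R > 0" and F1: "nice R F1" and F2: "nice R F2"
    and g: "\<And>i. i < m \<Longrightarrow> norm (gam i) = 1"
    and Tinf: "infinite {t. good m c gam (t, 1)}"
    and S1: "\<And>x. (\<Sum>i<m. c i * divbeam (gam i) (\<lambda>y. fst (gam i) * F1 y + snd (gam i) * F2 y) x) = 0"
    and S2: "\<And>x. (\<Sum>i<m. c i * divbeam (gam i) (\<lambda>y. (- snd (gam i)) * F1 y + fst (gam i) * F2 y) x) = 0"
  shows "F1 x = 0 \<and> F2 x = 0"
proof -
  let ?T = "{t. good m c gam (t, 1)}"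
  have LamZ: "Lam R F1 t s = 0 \<and> Lam R F2 t s = 0" if t: "t \<in> ?T" for t s
  proof -
    let ?a = "\<lambda>i. t * fst (gam i) + snd (gam i)"
    have ai: "(t, 1) \<bullet> gam i = ?a i" for i by (simp add: inner_prod_def)
    have a: "?a i \<noteq> 0" if "i < m" for i using t that ai[of i] unfolding good_def by auto
    obtain K1 where K1: "\<And>s. (\<Sum>i<m. (c i / ?a i) * (fst (gam i) * Jf R F1 t s + snd (gam i) * Jf R F2 t s)) = K1"
      using comb_const[OF F1 F2 R g a S1] by blast
    obtain K2 where K2: "\<And>s. (\<Sum>i<m. (c i / ?a i) * ((- snd (gam i)) * Jf R F1 t s + fst (gam i) * Jf R F2 t s)) = K2"
      using comb_const[OF F1 F2 R g a S2] by blast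
    define V1 where "V1 = (\<Sum>i<m. (c i / ?a i) * fst (gam i))"
    define V2 where "V2 = (\<Sum>i<m. (c i / ?a i) * snd (gam i))"
    have E1: "V1 * Jf R F1 t s + V2 * Jf R F2 t s = K1" for s
    proof -
      have "(\<Sum>i<m. (c i / ?a i) * (fst (gam i) * Jf R F1 t s + snd (gam i) * Jf R F2 t s))
          = V1 * Jf R F1 t s + V2 * Jf R F2 t s"
        unfolding V1_def V2_def sum_distrib_right sum.distrib[symmetric]
        by (rule sum.cong) (simp_all add: distrib_left mult.assoc)
      then show ?thesis using K1[of s] by simp
    qed
    have E2: "- V2 * Jf R F1 t s + V1 * Jf R F2 t s = K2" for s
    proof -
      have "(\<Sum>i<m. (c i / ?a i) * ((- snd (gam i)) * Jf R F1 t s + fst (gam i) * Jf R F2 t s))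
          = - V2 * Jf R F1 t s + V1 * Jf R F2 t s"
        unfolding V1_def V2_def sum_distrib_right sum.distrib[symmetric] mult_minus_left[symmetric] sum_negf[symmetric]
        by (rule sum.cong) (simp_all add: distrib_left right_diff_distrib diff_divide_distrib mult.assoc)
      then show ?thesis using K2[of s] by simp
    qed
    let ?s0 = "- ((\<bar>t\<bar>+1)*R) - 1"
    have J10: "Jf R F1 t ?s0 = 0" unfolding Jf_def by (rule int_zero_on) auto
    have J20: "Jf R F2 t ?s0 = 0" unfolding Jf_def by (rule int_zero_on) auto
    have K10: "K1 = 0" using E1[of ?s0] J10 J20 by simp
    have K20: "K2 = 0" using E2[of ?s0] J10 J20 by simp
    have "gamma_vec m c gam (t, 1) = - (V1, V2)"
      unfolding gamma_vec_def V1_def V2_def ai by (simp add: prod_eq_iff fst_sum snd_sum)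
    moreover have "gamma_vec m c gam (t, 1) \<noteq> 0" using t unfolding good_def by auto
    ultimately have V: "V1 \<noteq> 0 \<or> V2 \<noteq> 0" by (auto simp: zero_prod_def)
    then have Vp: "V1 * V1 + V2 * V2 \<noteq> 0"
      by (metis add_nonneg_eq_0_iff mult_eq_0_iff zero_le_square)
    have J1: "Jf R F1 t s = 0" for s
    proof -
      have "(V1 * V1 + V2 * V2) * Jf R F1 t s = V1 * (V1 * Jf R F1 t s + V2 * Jf R F2 t s) - V2 * (- V2 * Jf R F1 t s + V1 * Jf R F2 t s)"
        by (simp add: algebra_simps)
      also have "\<dots> = 0" using E1[of s] E2[of s] K10 K20 by simp
      finally show ?thesis using Vp by (metis mult_eq_0_iff)
    qed
    have J2: "Jf R F2 t s = 0" for s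
    proof -
      have "(V1 * V1 + V2 * V2) * Jf R F2 t s = V2 * (V1 * Jf R F1 t s + V2 * Jf R F2 t s) + V1 * (- V2 * Jf R F1 t s + V1 * Jf R F2 t s)"
        by (simp add: algebra_simps)
      also have "\<dots> = 0" using E1[of s] E2[of s] K10 K20 by simp
      finally show ?thesis using Vp by (metis mult_eq_0_iff)
    qed
    show ?thesis using Lam_from_Jf[OF F1 R J1] Lam_from_Jf[OF F2 R J2] by simp
  qed
  have zero: "f x = 0" if f: "nice R f" and L: "\<And>t s. t \<in> ?T \<Longrightarrow> Lam R f t s = 0" for f
  proof (rule zero_from_moments[OF f R])
    fix j l
    show "integral (cbox (-R,-R) (R,R)) (\<lambda>x. f x * fst x ^ j * snd x ^ l) = 0"
    proof (rule moments_vanish[OF f Tinf])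
      fix t n assume "t \<in> ?T"
      show "integral (cbox (-R,-R) (R,R)) (\<lambda>x. f x * (t * fst x + snd x) ^ n) = 0"
      proof -
        have "continuous_on UNIV (\<lambda>s::real. s ^ n)" by (intro continuous_intros)
        then show ?thesis using moment_zero[OF f R, of t "\<lambda>s. s ^ n"] L[OF \<open>t \<in> ?T\<close>] by blast
      qed
    qed
  qed
  show ?thesis using zero[OF F1] zero[OF F2] LamZ by blast
qed

lemma nice_of_C2c:
  assumes "C2c (ball 0 R) h"
  shows "nice R h"
  unfolding nice_def
proof
  from assms obtain f' where d: "\<And>x. (h has_derivative blinfun_apply (f' x)) (at x)"
    unfolding C2c_def C2_def by blast
  have "isCont h x" for x using has_derivative_continuous[OF d[of x]] .
  then show "continuous_on UNIV h" by (simp add: continuous_at_imp_continuous_on)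
  show "\<forall>x. R \<le> norm x \<longrightarrow> h x = 0"
  proof (intro allI impI)
    fix x :: "real \<times> real" assume x: "R \<le> norm x"
    show "h x = 0"
    proof (rule ccontr)
      assume "h x \<noteq> 0"
      then have "x \<in> closure {x. h x \<noteq> 0}" by (simp add: closure_def)
      then have "x \<in> ball 0 R" using assms unfolding C2c_def by blast
      then show False using x by simp
    qed
  qed
qed

lemma nice_diff:
  assumes "nice R A" "nice R B"
  shows "nice R (\<lambda>y. A y - B y)"
proof -
  have "nice R (\<lambda>y. 1 * A y + (-1) * B y)" by (rule nice_lin[OF assms])
  then show ?thesis by simp
qed

lemma nice_inner:
  assumes "nice R (\<lambda>y. fst (f y))" "nice R (\<lambda>y. snd (f y))"
  shows "nice R (\<lambda>y. f y \<bullet> v)"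
proof -
  have "nice R (\<lambda>y. fst v * fst (f y) + snd v * snd (f y))" by (rule nice_lin[OF assms])
  moreover have "(\<lambda>y. fst v * fst (f y) + snd v * snd (f y)) = (\<lambda>y. f y \<bullet> v)"
    by (auto simp: inner_prod_def)
  ultimately show ?thesis by simp
qed

theorem corollary2:
  fixes R :: real and m :: nat and c :: "nat \<Rightarrow> real" and gam :: "nat \<Rightarrow> real \<times> real"
  assumes "R > 0"
    and "inj_on gam {..<m}"
    and "\<And>i. i < m \<Longrightarrow> norm (gam i) = 1"
    and "\<And>i. i < m \<Longrightarrow> c i \<noteq> 0"
    and "\<exists>psi. norm psi = 1 \<and> psi \<notin> Z1 m gam \<and> gamma_vec m c gam psi \<noteq> 0"
  shows "inj_on (star_transform m c gam)
           {f. C2c (ball 0 R) (\<lambda>x. fst (f x)) \<and> C2c (ball 0 R) (\<lambda>x. snd (f x))}"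
proof (rule inj_onI)
  note R = assms(1) and g = assms(3)
  obtain psi where psi: "norm psi = 1" "psi \<notin> Z1 m gam" "gamma_vec m c gam psi \<noteq> 0"
    using assms(5) by blast
  have Tinf: "infinite {t. good m c gam (t, 1)}" by (rule good_T_infinite[OF psi])
  fix f h
  assume f: "f \<in> {f. C2c (ball 0 R) (\<lambda>x. fst (f x)) \<and> C2c (ball 0 R) (\<lambda>x. snd (f x))}"
    and h: "h \<in> {f. C2c (ball 0 R) (\<lambda>x. fst (f x)) \<and> C2c (ball 0 R) (\<lambda>x. snd (f x))}"
    and eq: "star_transform m c gam f = star_transform m c gam h"
  have f1: "nice R (\<lambda>x. fst (f x))" and f2: "nice R (\<lambda>x. snd (f x))"
    using f nice_of_C2c by auto
  have h1: "nice R (\<lambda>x. fst (h x))" and h2: "nice R (\<lambda>x. snd (h x))"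
    using h nice_of_C2c by auto
  define F1 where "F1 y = fst (f y) - fst (h y)" for y
  define F2 where "F2 y = snd (f y) - snd (h y)" for y
  have F1: "nice R F1" unfolding F1_def[abs_def] by (rule nice_diff[OF f1 h1])
  have F2: "nice R F2" unfolding F2_def[abs_def] by (rule nice_diff[OF f2 h2])
  have dv: "divbeam (gam i) (\<lambda>y. f y \<bullet> v - h y \<bullet> v) x = divbeam (gam i) (\<lambda>y. f y \<bullet> v) x - divbeam (gam i) (\<lambda>y. h y \<bullet> v) x"
    if "i < m" for i v x
    by (rule divbeam_diff[OF nice_inner[OF f1 f2] nice_inner[OF h1 h2] g[OF that]])
  have S1: "(\<Sum>i<m. c i * divbeam (gam i) (\<lambda>y. fst (gam i) * F1 y + snd (gam i) * F2 y) x) = 0" for x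
  proof -
    have e: "(\<lambda>y. fst (gam i) * F1 y + snd (gam i) * F2 y) = (\<lambda>y. f y \<bullet> gam i - h y \<bullet> gam i)" for i
      by (auto simp: F1_def F2_def inner_prod_def algebra_simps)
    have "(\<Sum>i<m. c i * divbeam (gam i) (\<lambda>y. fst (gam i) * F1 y + snd (gam i) * F2 y) x)
        = (\<Sum>i<m. c i * divbeam (gam i) (\<lambda>y. f y \<bullet> gam i) x) - (\<Sum>i<m. c i * divbeam (gam i) (\<lambda>y. h y \<bullet> gam i) x)"
      unfolding e sum_subtractf[symmetric] by (rule sum.cong) (simp_all add: dv right_diff_distrib)
    also have "\<dots> = fst (star_transform m c gam f x) - fst (star_transform m c gam h x)"
      unfolding star_transform_def by simp
    also have "\<dots> = 0" using eq by simp
    finally show ?thesis .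
  qed
  have S2: "(\<Sum>i<m. c i * divbeam (gam i) (\<lambda>y. (- snd (gam i)) * F1 y + fst (gam i) * F2 y) x) = 0" for x
  proof -
    have e: "(\<lambda>y. (- snd (gam i)) * F1 y + fst (gam i) * F2 y) = (\<lambda>y. f y \<bullet> perp (gam i) - h y \<bullet> perp (gam i))" for i
      by (auto simp: F1_def F2_def inner_prod_def perp_def algebra_simps)
    have "(\<Sum>i<m. c i * divbeam (gam i) (\<lambda>y. (- snd (gam i)) * F1 y + fst (gam i) * F2 y) x)
        = (\<Sum>i<m. c i * divbeam (gam i) (\<lambda>y. f y \<bullet> perp (gam i)) x) - (\<Sum>i<m. c i * divbeam (gam i) (\<lambda>y. h y \<bullet> perp (gam i)) x)"
      unfolding e sum_subtractf[symmetric] by (rule sum.cong) (simp_all add: dv right_diff_distrib)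
    also have "\<dots> = snd (star_transform m c gam f x) - snd (star_transform m c gam h x)"
      unfolding star_transform_def by simp
    also have "\<dots> = 0" using eq by simp
    finally show ?thesis .
  qed
  have "F1 x = 0 \<and> F2 x = 0" for x
    by (rule main_zero[OF R F1 F2 g Tinf S1 S2])
  then show "f = h" unfolding F1_def F2_def by (auto simp: fun_eq_iff prod_eq_iff)
qed

end
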